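(* Let $(X,\mu)$ be a non-atomic probability measure space equipped with a tree $\mathcal{T}$, with associated dyadic maximal operator $\mathcal{M}_{\mathcal{T}}$, and let $0<q<1$. Let $g:(0,1]\to\mathbb{R}^+$ be integrable and non-increasing with $\int_0^1\big(\frac1t\int_0^t g(u)\,du\big)^q dt<+\infty$. Then for every measurable $\phi:X\to\mathbb{R}^+$ with $\phi^*=g$, $$\int_X(\mathcal{M}_{\mathcal{T}}\phi)^q\,d\mu\le\int_0^1\Big(\frac1t\int_0^t g(u)\,du\Big)^q dt.$$
   Context: A set $\mathcal{T}$ of measurable subsets of $X$ is a tree if: (i) $X\in\mathcal{T}$ and $\mu(I)>0$ for every $I\in\mathcal{T}$; (ii) for every $I\in\mathcal{T}$ there is a finite or countable set $C(I)\subseteq\mathcal{T}$ with at least two elements, consisting of pairwise disjoint subsets of $I$ whose union is $I$; (iii) $\mathcal{T}=\bigcup_{m\ge0}\mathcal{T}_{(m)}$ where $\mathcal{T}_{(0)}=\{X\}$ and $\mathcal{T}_{(m+1)}=\bigcup_{I\in\mathcal{T}_{(m)}}C(I)$; (iv) $\lim_{m\to\infty}\sup_{I\in\mathcal{T}_{(m)}}\mu(I)=0$. The dyadic maximal operator is $\mathcal{M}_{\mathcal{T}}\phi(x)=\sup\{\frac{1}{\mu(I)}\int_I|\phi|\,d\mu : x\in I\in\mathcal{T}\}$. The decreasing rearrangement of $\phi$ is $\phi^*(t)=\sup_{e\subseteq X,\ \mu(e)=t}\ \inf_{x\in e}|\phi(x)|$ for $0<t\le1$. *)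

theory Defs
  imports "HOL-Probability.Probability"
begin

definition non_atomic :: "'a measure \<Rightarrow> bool" where
  "non_atomic M \<longleftrightarrow> (\<forall>A\<in>sets M. measure M A > 0 \<longrightarrow>
      (\<exists>B\<in>sets M. B \<subseteq> A \<and> 0 < measure M B \<and> measure M B < measure M A))"

primrec tree_level :: "'a set \<Rightarrow> ('a set \<Rightarrow> 'a set set) \<Rightarrow> nat \<Rightarrow> 'a set set" where
  "tree_level X C 0 = {X}"
| "tree_level X C (Suc m) = (\<Union>I\<in>tree_level X C m. C I)"

definition tree_with_children :: "'a measure \<Rightarrow> 'a set set \<Rightarrow> ('a set \<Rightarrow> 'a set set) \<Rightarrow> bool" where
  "tree_with_children M T C \<longleftrightarrow>
     T \<subseteq> sets M \<and>
     space M \<in> T \<and> (\<forall>I\<in>T. measure M I > 0) \<and>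
     (\<forall>I\<in>T. C I \<subseteq> T \<and> countable (C I) \<and> (\<exists>J\<in>C I. \<exists>K\<in>C I. J \<noteq> K) \<and>
              (\<forall>J\<in>C I. J \<subseteq> I) \<and> pairwise disjnt (C I) \<and> \<Union>(C I) = I) \<and>
     T = (\<Union>m. tree_level (space M) C m) \<and>
     (\<lambda>m. SUP I\<in>tree_level (space M) C m. measure M I) \<longlonglongrightarrow> 0"

definition is_tree :: "'a measure \<Rightarrow> 'a set set \<Rightarrow> bool" where
  "is_tree M T \<longleftrightarrow> (\<exists>C. tree_with_children M T C)"

definition dyadic_max :: "'a measure \<Rightarrow> 'a set set \<Rightarrow> ('a \<Rightarrow> real) \<Rightarrow> 'a \<Rightarrow> ennreal" where
  "dyadic_max M T \<phi> x = (SUP I\<in>{I\<in>T. x \<in> I}. (\<integral>\<^sup>+ y\<in>I. ennreal \<bar>\<phi> y\<bar> \<partial>M) / emeasure M I)"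

definition decr_rearr :: "'a measure \<Rightarrow> ('a \<Rightarrow> real) \<Rightarrow> real \<Rightarrow> real" where
  "decr_rearr M \<phi> t = (SUP e\<in>{e\<in>sets M. measure M e = t}. INF x\<in>e. \<bar>\<phi> x\<bar>)"

definition ennreal_powr :: "ennreal \<Rightarrow> real \<Rightarrow> ennreal" where
  "ennreal_powr x q = (if x = \<infinity> then \<infinity> else ennreal (enn2real x powr q))"

end

theory Submission
  imports Defs
begin


lemma lborel_Ico_ennreal:
  fixes c :: ennreal
  shows "emeasure lborel {r::real. 0 \<le> r \<and> ennreal r < c} = c"
proof (cases "c = \<infinity>")
  case True
  have "emeasure lborel {r::real. 0 \<le> r \<and> ennreal r < c} = emeasure lborel {0::real..}"
    using True by (intro arg_cong[where f="emeasure lborel"]) auto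
  also have "\<dots> = \<infinity>"
  proof -
    have "ennreal (real n) \<le> emeasure lborel {0::real..}" for n
    proof -
      have "ennreal (real n) = emeasure lborel {0::real..<real n}" by simp
      also have "\<dots> \<le> emeasure lborel {0::real..}" by (intro emeasure_mono) auto
      finally show ?thesis .
    qed
    then have "(SUP n. (of_nat n::ennreal)) \<le> emeasure lborel {0::real..}"
      by (intro SUP_least) (simp add: ennreal_of_nat_eq_real_of_nat)
    then show ?thesis
      by (simp add: ennreal_SUP_of_nat_eq_top top_unique)
  qed
  finally show ?thesis using True by simp
next
  case False
  then obtain a where a: "c = ennreal a" "0 \<le> a" by (cases c) auto
  have "{r::real. 0 \<le> r \<and> ennreal r < c} = {0..<a}"
    using a by (auto simp: ennreal_less_iff)
  then show ?thesis using a by simp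
qed

lemma layer_cake:
  fixes f :: "'a \<Rightarrow> ennreal"
  assumes M: "sigma_finite_measure M" and f[measurable]: "f \<in> borel_measurable M"
  shows "(\<integral>\<^sup>+x. f x \<partial>M) = (\<integral>\<^sup>+r. indicator {0..} r * emeasure M {x\<in>space M. ennreal r < f x} \<partial>lborel)"
proof -
  interpret M: sigma_finite_measure M by fact
  interpret P: pair_sigma_finite M lborel
    by (intro pair_sigma_finite.intro M lborel.sigma_finite_measure_axioms)
  let ?H = "\<lambda>x (r::real). indicator {r. 0 \<le> r \<and> ennreal r < f x} r :: ennreal"
  have meas: "case_prod ?H \<in> borel_measurable (M \<Otimes>\<^sub>M lborel)"
  proof -
    have "case_prod ?H = (\<lambda>p. if 0 \<le> snd p \<and> ennreal (snd p) < f (fst p) then 1 else 0)"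
      by (auto simp: indicator_def fun_eq_iff)
    also have "\<dots> \<in> borel_measurable (M \<Otimes>\<^sub>M lborel)"
    proof -
      have a: "(\<lambda>p. ennreal (snd p)) \<in> borel_measurable (M \<Otimes>\<^sub>M lborel)" by measurable
      have b: "(\<lambda>p. f (fst p)) \<in> borel_measurable (M \<Otimes>\<^sub>M lborel)" by measurable
      have c: "(\<lambda>p. snd p::real) \<in> borel_measurable (M \<Otimes>\<^sub>M lborel)" by measurable
      have "{p \<in> space (M \<Otimes>\<^sub>M lborel). 0 \<le> snd p \<and> ennreal (snd p) < f (fst p)} \<in> sets (M \<Otimes>\<^sub>M lborel)"
        using a b c by measurable
      then have "{p. 0 \<le> snd p \<and> ennreal (snd p) < f (fst p)} \<inter> space (M \<Otimes>\<^sub>M lborel) \<in> sets (M \<Otimes>\<^sub>M lborel)"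
        by (simp add: Int_def conj_commute)
      from measurable_If_set[OF measurable_const[of "1::ennreal"] measurable_const[of "0::ennreal"] this]
      show ?thesis by simp
    qed
    finally show ?thesis .
  qed
  have "(\<integral>\<^sup>+x. f x \<partial>M) = (\<integral>\<^sup>+x. (\<integral>\<^sup>+r. ?H x r \<partial>lborel) \<partial>M)"
    by (intro nn_integral_cong) (simp add: lborel_Ico_ennreal)
  also have "\<dots> = (\<integral>\<^sup>+r. (\<integral>\<^sup>+x. ?H x r \<partial>M) \<partial>lborel)"
    using P.Fubini'[OF meas] by simp
  also have "\<dots> = (\<integral>\<^sup>+r. indicator {0..} r * emeasure M {x\<in>space M. ennreal r < f x} \<partial>lborel)"
  proof (intro nn_integral_cong)
    fix r :: real
    have "(\<integral>\<^sup>+x. ?H x r \<partial>M) = (\<integral>\<^sup>+x. indicator {0..} r * indicator {x\<in>space M. ennreal r < f x} x \<partial>M)"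
      by (intro nn_integral_cong) (auto simp: indicator_def)
    also have "\<dots> = indicator {0..} r * emeasure M {x\<in>space M. ennreal r < f x}"
      by (subst nn_integral_cmult) auto
    finally show "(\<integral>\<^sup>+x. ?H x r \<partial>M) = indicator {0..} r * emeasure M {x\<in>space M. ennreal r < f x}" .
  qed
  finally show ?thesis .
qed



lemma non_atomic_small:
  assumes fm: "finite_measure M" and na: "non_atomic M"
    and A: "A \<in> sets M" "measure M A > 0" and eps: "\<epsilon> > 0"
  shows "\<exists>B\<in>sets M. B \<subseteq> A \<and> 0 < measure M B \<and> measure M B < \<epsilon>"
proof -
  interpret finite_measure M by fact
  have *: "\<exists>B\<in>sets M. B \<subseteq> A \<and> 0 < measure M B \<and> measure M B \<le> measure M A / 2 ^ n" for n
  proof (induction n)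
    case 0 then show ?case using A by auto
  next
    case (Suc n)
    then obtain B where B: "B \<in> sets M" "B \<subseteq> A" "0 < measure M B" "measure M B \<le> measure M A / 2 ^ n" by blast
    then obtain B' where B': "B' \<in> sets M" "B' \<subseteq> B" "0 < measure M B'" "measure M B' < measure M B"
      using na unfolding non_atomic_def by blast
    have diff: "measure M (B - B') = measure M B - measure M B'"
      using B B' by (intro finite_measure_Diff) auto
    have h: "measure M B / 2 \<le> measure M A / 2 ^ Suc n"
      using B(4) by (simp add: divide_right_mono)
    show ?case
    proof (cases "measure M B' \<le> measure M B / 2")
      case True
      then have "measure M B' \<le> measure M A / 2 ^ Suc n" using h by linarith
      then show ?thesis using B B' by blast
    next
      case False
      then have "measure M (B - B') \<le> measure M A / 2 ^ Suc n" "0 < measure M (B - B')" using h diff B' by linarith+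
      then show ?thesis using B B' by blast
    qed
  qed
  obtain n where n: "measure M A / \<epsilon> < 2 ^ n"
    using real_arch_pow[of 2 "measure M A / \<epsilon>"] by auto
  then have "measure M A / 2 ^ n < \<epsilon>" using eps by (simp add: field_simps)
  moreover obtain B where "B\<in>sets M" "B \<subseteq> A" "0 < measure M B" "measure M B \<le> measure M A / 2 ^ n"
    using *[of n] by blast
  ultimately show ?thesis by (intro bexI[of _ B]) auto
qed

lemma sierpinski:
  assumes fm: "finite_measure M" and na: "non_atomic M"
    and A: "A \<in> sets M" and t: "0 \<le> t" "t \<le> measure M A"
  shows "\<exists>e\<in>sets M. e \<subseteq> A \<and> measure M e = t"
proof -
  interpret finite_measure M by fact
  define S where "S D = {B\<in>sets M. B \<subseteq> A - D \<and> measure M D + measure M B \<le> t}" for D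
  define \<sigma> where "\<sigma> D = Sup (measure M ` S D)" for D
  define nxt where "nxt D = (SOME B. B \<in> S D \<and> \<sigma> D / 2 \<le> measure M B)" for D
  define e where "e = rec_nat {} (\<lambda>_ D. D \<union> nxt D)"
  have e0: "e 0 = {}" and eS: "e (Suc n) = e n \<union> nxt (e n)" for n by (simp_all add: e_def)
  have bdd: "bdd_above (measure M ` S D)" for D
    by (intro bdd_aboveI[of _ "measure M (space M)"]) (auto simp: S_def intro!: bounded_measure)
  have nxt: "nxt D \<in> S D \<and> \<sigma> D / 2 \<le> measure M (nxt D)" if "measure M D \<le> t" for D
  proof -
    have emp: "{} \<in> S D" using that by (auto simp: S_def)
    have "\<exists>B. B \<in> S D \<and> \<sigma> D / 2 \<le> measure M B"
    proof (cases "\<sigma> D > 0")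
      case True
      then have "\<sigma> D / 2 < Sup (measure M ` S D)" by (simp add: \<sigma>_def)
      then obtain B where "B \<in> S D" "\<sigma> D / 2 < measure M B"
        using emp by (subst (asm) less_cSup_iff) (auto intro: bdd)
      then show ?thesis by (intro exI[of _ B]) auto
    next
      case False
      then show ?thesis using emp by (intro exI[of _ "{}"]) auto
    qed
    then show ?thesis unfolding nxt_def by (rule someI_ex)
  qed
  have inv: "e n \<in> sets M \<and> e n \<subseteq> A \<and> measure M (e n) \<le> t" for n
  proof (induction n)
    case 0 then show ?case using t by (simp add: e0)
  next
    case (Suc n)
    then have N: "nxt (e n) \<in> S (e n)" using nxt by blast
    then have "measure M (e n \<union> nxt (e n)) = measure M (e n) + measure M (nxt (e n))"
      using Suc by (intro finite_measure_Union) (auto simp: S_def)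
    then show ?case using Suc N by (auto simp: eS S_def)
  qed
  have inc: "incseq e" by (rule incseq_SucI) (simp add: eS)
  define E where "E = (\<Union>n. e n)"
  have E: "E \<in> sets M" "E \<subseteq> A" using inv by (auto simp: E_def)
  have "emeasure M E = (SUP n. emeasure M (e n))"
    unfolding E_def using inv inc by (intro SUP_emeasure_incseq[symmetric]) auto
  also have "\<dots> \<le> ennreal t"
    using inv by (intro SUP_least) (simp add: emeasure_eq_measure ennreal_leI)
  finally have Et: "measure M E \<le> t" using t by (simp add: emeasure_eq_measure)
  have "measure M E \<ge> t"
  proof (rule ccontr)
    assume "\<not> t \<le> measure M E"
    then have lt: "measure M E < t" by simp
    have "measure M (A - E) = measure M A - measure M E"
      using A E by (intro finite_measure_Diff) auto
    then have "measure M (A - E) > 0" using lt t by simp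
    then obtain B where B: "B \<in> sets M" "B \<subseteq> A - E" "0 < measure M B" "measure M B < t - measure M E"
      using non_atomic_small[OF fm na, of "A - E" "t - measure M E"] A E lt by auto
    have sub: "e n \<subseteq> E" for n by (auto simp: E_def)
    have grow: "measure M (nxt (e n)) \<ge> measure M B / 2" for n
    proof -
      have "measure M (e n) \<le> measure M E" using sub E inv by (intro finite_measure_mono) auto
      then have "B \<in> S (e n)" using B sub by (auto simp: S_def)
      then have "measure M B \<le> \<sigma> (e n)" unfolding \<sigma>_def by (intro cSup_upper bdd) auto
      then show ?thesis using nxt[of "e n"] inv by auto
    qed
    have lin: "measure M (e n) \<ge> real n * (measure M B / 2)" for n
    proof (induction n)
      case 0 then show ?case by (simp add: e0)
    next
      case (Suc n)
      have N: "nxt (e n) \<in> S (e n)" using nxt inv by blast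
      then have "measure M (e (Suc n)) = measure M (e n) + measure M (nxt (e n))"
        unfolding eS using inv by (intro finite_measure_Union) (auto simp: S_def)
      then show ?case using Suc grow[of n] by (simp add: algebra_simps)
    qed
    obtain n where n: "t / (measure M B / 2) < real n" using reals_Archimedean2 by blast
    then have "t < real n * (measure M B / 2)" using B by (simp add: field_simps)
    with lin[of n] inv[of n] show False by simp
  qed
  with Et E show ?thesis by (intro bexI[of _ E]) auto
qed



context
  fixes M :: "'a measure" and T :: "'a set set" and C :: "'a set \<Rightarrow> 'a set set"
  assumes tw: "tree_with_children M T C"
begin

private abbreviation "L \<equiv> tree_level (space M) C"

lemma tw_T: "T = (\<Union>m. L m)" using tw unfolding tree_with_children_def by blast
lemma tw_sets: "T \<subseteq> sets M" using tw unfolding tree_with_children_def by blast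
lemma tw_pos: "I \<in> T \<Longrightarrow> measure M I > 0" using tw unfolding tree_with_children_def by blast
lemma tw_C: "I \<in> T \<Longrightarrow> C I \<subseteq> T \<and> countable (C I) \<and> (\<forall>J\<in>C I. J \<subseteq> I) \<and> pairwise disjnt (C I) \<and> \<Union>(C I) = I"
  using tw unfolding tree_with_children_def by blast

lemma tl_T: "L m \<subseteq> T" using tw_T by blast

lemma tw_ne: "I \<in> T \<Longrightarrow> I \<noteq> {}" using tw_pos by fastforce

lemma tl_union: "\<Union>(L m) = space M"
proof (induction m)
  case 0 then show ?case by simp
next
  case (Suc m)
  have "\<Union>(L (Suc m)) = (\<Union>I\<in>L m. \<Union>(C I))" by auto
  also have "\<dots> = (\<Union>I\<in>L m. I)" using tw_C tl_T by (intro SUP_cong) auto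
  finally show ?case using Suc by simp
qed

lemma tl_disj: "I \<in> L m \<Longrightarrow> J \<in> L m \<Longrightarrow> I \<noteq> J \<Longrightarrow> I \<inter> J = {}"
proof (induction m arbitrary: I J)
  case 0 then show ?case by simp
next
  case (Suc m)
  then obtain I0 J0 where I0: "I0 \<in> L m" "I \<in> C I0" and J0: "J0 \<in> L m" "J \<in> C J0" by auto
  have T0: "I0 \<in> T" "J0 \<in> T" using I0 J0 tl_T by auto
  show ?case
  proof (cases "I0 = J0")
    case True
    then show ?thesis using tw_C[OF T0(1)] I0 J0 Suc.prems unfolding pairwise_def disjnt_def by blast
  next
    case False
    then have "I0 \<inter> J0 = {}" using Suc.IH I0 J0 by blast
    moreover have "I \<subseteq> I0" "J \<subseteq> J0" using tw_C[OF T0(1)] tw_C[OF T0(2)] I0 J0 by auto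
    ultimately show ?thesis by blast
  qed
qed

lemma tl_below: "J \<in> L (m + k) \<Longrightarrow> \<exists>I\<in>L m. J \<subseteq> I"
proof (induction k arbitrary: J)
  case 0 then show ?case by auto
next
  case (Suc k)
  then obtain J0 where J0: "J0 \<in> L (m + k)" "J \<in> C J0" by auto
  then have "J \<subseteq> J0" using tw_C tl_T by blast
  with Suc.IH[OF J0(1)] show ?case by blast
qed

lemma tw_nested: "I \<in> T \<Longrightarrow> J \<in> T \<Longrightarrow> I \<subseteq> J \<or> J \<subseteq> I \<or> I \<inter> J = {}"
proof -
  assume "I \<in> T" "J \<in> T"
  then obtain m n where I: "I \<in> L m" and J: "J \<in> L n" using tw_T by blast
  show ?thesis
  proof (cases "m \<le> n")
    case True
    then obtain k where "n = m + k" using le_Suc_ex by blast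
    then obtain I' where "I' \<in> L m" "J \<subseteq> I'" using tl_below J by blast
    then show ?thesis using tl_disj[OF I] by blast
  next
    case False
    then obtain k where "m = n + k" using le_Suc_ex[of n m] by auto
    then obtain J' where "J' \<in> L n" "I \<subseteq> J'" using tl_below I by blast
    then show ?thesis using tl_disj[OF J] by blast
  qed
qed

lemma tw_anc_finite: "I \<in> T \<Longrightarrow> finite {J\<in>T. I \<subseteq> J}"
proof -
  assume IT: "I \<in> T"
  then obtain n where I: "I \<in> L n" using tw_T by blast
  have ne: "I \<noteq> {}" using tw_ne IT .
  have fin1: "finite {K\<in>L m. I \<subseteq> K}" for m
  proof (cases "{K\<in>L m. I \<subseteq> K} = {}")
    case True then show ?thesis by (simp only: finite.emptyI)
  next
    case False
    then obtain K where K: "K \<in> L m" "I \<subseteq> K" by blast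
    have "{K\<in>L m. I \<subseteq> K} \<subseteq> {K}"
    proof
      fix K' assume "K' \<in> {K\<in>L m. I \<subseteq> K}"
      then show "K' \<in> {K}" using tl_disj[OF K(1), of K'] K ne by blast
    qed
    then show ?thesis using finite_subset by blast
  qed
  have "{J\<in>T. I \<subseteq> J} \<subseteq> insert I (\<Union>m\<in>{..<n}. {K\<in>L m. I \<subseteq> K})"
  proof
    fix J assume "J \<in> {J\<in>T. I \<subseteq> J}"
    then obtain m where J: "J \<in> L m" and IJ: "I \<subseteq> J" using tw_T by blast
    show "J \<in> insert I (\<Union>m\<in>{..<n}. {K\<in>L m. I \<subseteq> K})"
    proof (cases "m < n")
      case True then show ?thesis using J IJ by blast
    next
      case False
      then obtain k where "m = n + k" using le_Suc_ex[of n m] by auto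
      then obtain I' where I': "I' \<in> L n" "J \<subseteq> I'" using tl_below J by blast
      then have "I' = I" using tl_disj[OF I'(1) I] IJ ne by blast
      then show ?thesis using IJ I' by blast
    qed
  qed
  moreover have "finite (insert I (\<Union>m\<in>{..<n}. {K\<in>L m. I \<subseteq> K}))" using fin1 by auto
  ultimately show ?thesis using finite_subset by blast
qed

lemma tw_countable: "countable T"
proof -
  have "countable (L m)" for m
  proof (induction m)
    case 0 then show ?case by simp
  next
    case (Suc m)
    then show ?case using tw_C tl_T by (auto intro!: countable_UN)
  qed
  then show ?thesis using tw_T by auto
qed

lemma tw_maximal:
  assumes F: "F \<subseteq> T"
  defines "F' \<equiv> {I\<in>F. \<forall>J\<in>F. I \<subseteq> J \<longrightarrow> J = I}"
  shows "F' \<subseteq> F" "\<Union>F' = \<Union>F" "disjoint F'"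
proof -
  show "F' \<subseteq> F" by (auto simp: F'_def)
  have "\<exists>K\<in>F'. I \<subseteq> K" if I: "I \<in> F" for I
  proof -
    let ?S = "{J\<in>F. I \<subseteq> J}"
    have "finite ?S" using tw_anc_finite[of I] I F by (rule_tac finite_subset[of _ "{J\<in>T. I \<subseteq> J}"]) auto
    moreover have "?S \<noteq> {}" using I by blast
    ultimately obtain m where m: "m \<in> ?S" "\<forall>b\<in>?S. m \<subseteq> b \<longrightarrow> m = b"
      using finite_has_maximal by blast
    then have "m \<in> F'" unfolding F'_def by auto
    then show ?thesis using m by blast
  qed
  then show "\<Union>F' = \<Union>F" using \<open>F' \<subseteq> F\<close> by blast
  show "disjoint F'"
  proof (rule disjointI)
    fix I J assume "I \<in> F'" "J \<in> F'" "I \<noteq> J"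
    then show "I \<inter> J = {}" using tw_nested[of I J] F unfolding F'_def by blast
  qed
qed

end


lemma set_integrable_const_Ioc:
  fixes a b c :: real assumes "a \<le> b"
  shows "set_integrable lborel {a<..b} (\<lambda>_. c)"
proof -
  have "integrable lborel (\<lambda>x. c * indicator {a<..b} x)"
    using assms by (intro integrable_mult_right integrable_real_indicator) auto
  then show ?thesis unfolding set_integrable_def by (simp add: mult.commute)
qed

context
  fixes g :: "real \<Rightarrow> real"
  assumes g0: "\<And>t. t \<in> {0<..1} \<Longrightarrow> g t \<ge> 0"
    and gi: "set_integrable lborel {0<..1} g"
    and gm: "\<And>s t. 0 < s \<Longrightarrow> s \<le> t \<Longrightarrow> t \<le> 1 \<Longrightarrow> g t \<le> g s"
begin

lemma g_int: "0 \<le> a \<Longrightarrow> b \<le> 1 \<Longrightarrow> set_integrable lborel {a<..b} g"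
  by (rule set_integrable_subset[OF gi]) auto

lemma g_nn: assumes "0 \<le> s" "s \<le> 1"
  shows "(\<integral>\<^sup>+t\<in>{0<..s}. ennreal (g t) \<partial>lborel) = ennreal (\<integral>t\<in>{0<..s}. g t \<partial>lborel)"
proof -
  have int: "integrable lborel (\<lambda>x. indicator {0<..s} x *\<^sub>R g x)"
    using g_int[of 0 s] assms unfolding set_integrable_def by simp
  have "(\<integral>\<^sup>+t\<in>{0<..s}. ennreal (g t) \<partial>lborel) = (\<integral>\<^sup>+t. ennreal (indicator {0<..s} t *\<^sub>R g t) \<partial>lborel)"
    by (intro nn_integral_cong) (auto simp: indicator_def)
  also have "\<dots> = ennreal (integral\<^sup>L lborel (\<lambda>x. indicator {0<..s} x *\<^sub>R g x))"
    using int assms by (intro nn_integral_eq_integral) (auto simp: indicator_def intro!: g0)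
  finally show ?thesis by (simp add: set_lebesgue_integral_def)
qed

lemma g_Gnonneg: "0 \<le> s \<Longrightarrow> s \<le> 1 \<Longrightarrow> 0 \<le> (\<integral>t\<in>{0<..s}. g t \<partial>lborel)"
  unfolding set_lebesgue_integral_def by (intro integral_nonneg_AE AE_I2) (auto simp: indicator_def intro!: g0)

lemma g_avg_mono:
  assumes t: "0 < t1" "t1 \<le> t2" "t2 \<le> 1"
  shows "t1 * (\<integral>u\<in>{0<..t2}. g u \<partial>lborel) \<le> t2 * (\<integral>u\<in>{0<..t1}. g u \<partial>lborel)"
proof -
  define G1 where "G1 = (\<integral>u\<in>{0<..t1}. g u \<partial>lborel)"
  define R where "R = (\<integral>u\<in>{t1<..t2}. g u \<partial>lborel)"
  have "{0<..t2} = {0<..t1} \<union> {t1<..t2}" using t by auto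
  then have split: "(\<integral>u\<in>{0<..t2}. g u \<partial>lborel) = G1 + R"
    unfolding G1_def R_def using t
    by (simp add: set_integral_Un[symmetric] g_int)
  have "R \<le> (\<integral>u\<in>{t1<..t2}. g t1 \<partial>lborel)"
    unfolding R_def using t
    by (intro set_integral_mono g_int set_integrable_const_Ioc) (auto intro!: gm)
  also have "\<dots> = (t2 - t1) * g t1" using t by (simp add: set_integral_const)
  finally have R: "R \<le> (t2 - t1) * g t1" .
  have "t1 * g t1 = (\<integral>u\<in>{0<..t1}. g t1 \<partial>lborel)" using t by (simp add: set_integral_const)
  also have "\<dots> \<le> G1"
    unfolding G1_def using t
    by (intro set_integral_mono g_int set_integrable_const_Ioc) (auto intro!: gm)
  finally have G1: "t1 * g t1 \<le> G1" .
  have "t1 * (G1 + R) \<le> t1 * G1 + t1 * ((t2 - t1) * g t1)"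
    using R t by (simp add: distrib_left mult_left_mono)
  also have "\<dots> = t1 * G1 + (t2 - t1) * (t1 * g t1)" by (simp add: algebra_simps)
  also have "\<dots> \<le> t1 * G1 + (t2 - t1) * G1"
    using G1 t by (intro add_left_mono mult_left_mono) auto
  also have "\<dots> = t2 * G1" by (simp add: algebra_simps)
  finally show ?thesis using split G1_def by simp
qed

end


context
  fixes M :: "'a measure" and g :: "real \<Rightarrow> real" and \<phi> :: "'a \<Rightarrow> real"
  assumes P: "prob_space M" and na: "non_atomic M"
    and g0: "\<And>t. t \<in> {0<..1} \<Longrightarrow> g t \<ge> 0"
    and gi: "set_integrable lborel {0<..1} g"
    and gm: "\<And>s t. 0 < s \<Longrightarrow> s \<le> t \<Longrightarrow> t \<le> 1 \<Longrightarrow> g t \<le> g s"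
    and phim[measurable]: "\<phi> \<in> borel_measurable M" and phi0: "\<And>x. x \<in> space M \<Longrightarrow> \<phi> x \<ge> 0"
    and rearr: "\<And>t. t \<in> {0<..1} \<Longrightarrow> decr_rearr M \<phi> t = g t"
begin

interpretation prob_space M by (rule P)

lemma rearr_gt:
  assumes r: "0 \<le> r" and t: "0 < t" "t \<le> 1" and tm: "t < measure M {x\<in>space M. r < \<phi> x}"
  shows "r < g t"
proof -
  define S where "S n = {x\<in>space M. r + 1 / Suc n \<le> \<phi> x}" for n :: nat
  have Ssets: "range S \<subseteq> sets M" unfolding S_def by (intro image_subsetI) measurable
  have Sinc: "incseq S"
  proof (rule incseq_SucI)
    fix n
    have "r + 1 / Suc (Suc n) \<le> r + 1 / Suc n" by (simp add: frac_le)
    then show "S n \<subseteq> S (Suc n)" unfolding S_def by auto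
  qed
  have "(\<Union>n. S n) = {x\<in>space M. r < \<phi> x}"
  proof (intro set_eqI iffI)
    fix x assume "x \<in> {x\<in>space M. r < \<phi> x}"
    then have x: "x \<in> space M" "0 < \<phi> x - r" by auto
    then obtain n where "1 / Suc n < \<phi> x - r"
      using nat_approx_posE by blast
    then show "x \<in> (\<Union>n. S n)" using x by (auto simp: S_def intro!: exI[of _ n])
  next
    fix x assume "x \<in> (\<Union>n. S n)"
    then obtain n where "x \<in> space M" "r + 1 / Suc n \<le> \<phi> x" by (auto simp: S_def)
    moreover have "0 < 1 / real (Suc n)" by simp
    ultimately have "x \<in> space M" "r < \<phi> x" by linarith+
    then show "x \<in> {x\<in>space M. r < \<phi> x}" by blast
  qed
  then have "(\<lambda>n. measure M (S n)) \<longlonglongrightarrow> measure M {x\<in>space M. r < \<phi> x}"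
    using finite_Lim_measure_incseq[OF Ssets Sinc] by simp
  then have "eventually (\<lambda>n. t < measure M (S n)) sequentially"
    using tm by (rule order_tendstoD(1))
  then obtain n where n: "t < measure M (S n)" by (auto simp: eventually_sequentially)
  have Sn: "S n \<in> sets M" using Ssets by auto
  obtain e where e: "e \<in> sets M" "e \<subseteq> S n" "measure M e = t"
    using sierpinski[OF finite_measure_axioms na Sn, of t] t n by auto
  have ene: "e \<noteq> {}" using e t by auto
  have low: "r + 1 / Suc n \<le> (INF x\<in>e. \<bar>\<phi> x\<bar>)"
    using ene e(2) by (intro cINF_greatest) (auto simp: S_def)
  define U where "U n = {x\<in>space M. real n < \<phi> x}" for n :: nat
  have Usets: "range U \<subseteq> sets M" unfolding U_def by (intro image_subsetI) measurable
  have Udec: "decseq U" by (rule decseq_SucI) (auto simp: U_def)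
  have "(\<Inter>n. U n) = {}"
  proof -
    have "x \<notin> (\<Inter>n. U n)" for x
    proof
      assume "x \<in> (\<Inter>n. U n)"
      moreover obtain k where "\<phi> x < real k" using reals_Archimedean2 by blast
      ultimately show False by (auto simp: U_def dest!: spec[of _ k])
    qed
    then show ?thesis by blast
  qed
  then have "(\<lambda>n. measure M (U n)) \<longlonglongrightarrow> 0"
    using finite_Lim_measure_decseq[OF Usets Udec] by simp
  then have "eventually (\<lambda>n. measure M (U n) < t) sequentially"
    using t(1) by (rule order_tendstoD(2))
  then obtain R where R: "measure M (U R) < t" by (auto simp: eventually_sequentially)
  have bdd: "bdd_above ((\<lambda>e. INF x\<in>e. \<bar>\<phi> x\<bar>) ` {e\<in>sets M. measure M e = t})"
  proof (rule bdd_aboveI2)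
    fix e' assume e': "e' \<in> {e\<in>sets M. measure M e = t}"
    show "(INF x\<in>e'. \<bar>\<phi> x\<bar>) \<le> real R"
    proof (rule ccontr)
      assume "\<not> ?thesis"
      then have gt: "real R < (INF x\<in>e'. \<bar>\<phi> x\<bar>)" by simp
      have "e' \<subseteq> U R"
      proof
        fix x assume x: "x \<in> e'"
        have "(INF x\<in>e'. \<bar>\<phi> x\<bar>) \<le> \<bar>\<phi> x\<bar>"
          using x by (intro cINF_lower bdd_belowI2[of _ 0]) auto
        moreover have "x \<in> space M" using x e' sets.sets_into_space by auto
        ultimately show "x \<in> U R" using gt phi0 by (auto simp: U_def)
      qed
      then have "measure M e' \<le> measure M (U R)"
        using e' Usets by (intro finite_measure_mono) auto
      then show False using e' R by auto
    qed
  qed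
  have "(INF x\<in>e. \<bar>\<phi> x\<bar>) \<le> decr_rearr M \<phi> t"
    unfolding decr_rearr_def using e by (intro cSup_upper bdd) auto
  then have "r + 1 / Suc n \<le> g t" using low rearr t by auto
  moreover have "0 < 1 / real (Suc n)" by simp
  ultimately show ?thesis by linarith
qed

lemma g_meas: "(\<lambda>t. indicator {0<..s} t * g t) \<in> borel_measurable lborel" if "s \<le> 1"
proof -
  have "(\<lambda>t. indicator {0<..1} t *\<^sub>R g t) \<in> borel_measurable lborel"
    using gi unfolding set_integrable_def by (rule borel_measurable_integrable)
  then have "(\<lambda>t. indicator {0<..s} t * (indicator {0<..1} t *\<^sub>R g t)) \<in> borel_measurable lborel"
    by measurable
  also have "(\<lambda>t. indicator {0<..s} t * (indicator {0<..1} t *\<^sub>R g t)) = (\<lambda>t. indicator {0<..s} t * g t)"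
    using that by (auto simp: fun_eq_iff indicator_def)
  finally show ?thesis .
qed

lemma HL:
  assumes E: "E \<in> sets M"
  shows "(\<integral>\<^sup>+x\<in>E. ennreal (\<phi> x) \<partial>M) \<le> (\<integral>\<^sup>+t\<in>{0<..measure M E}. ennreal (g t) \<partial>lborel)"
proof -
  define s where "s = measure M E"
  have s: "0 \<le> s" "s \<le> 1" unfolding s_def by auto
  have "(\<integral>\<^sup>+x\<in>E. ennreal (\<phi> x) \<partial>M)
      = (\<integral>\<^sup>+r. indicator {0..} r * emeasure M {x\<in>space M. ennreal r < ennreal (\<phi> x) * indicator E x} \<partial>lborel)"
    using E by (intro layer_cake) (auto intro: prob_space_imp_sigma_finite[OF P])
  also have "\<dots> \<le> (\<integral>\<^sup>+r. indicator {0..} r * emeasure lborel {t\<in>space lborel. ennreal r < ennreal (g t) * indicator {0<..s} t} \<partial>lborel)"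
  proof (intro nn_integral_mono)
    fix r :: real
    show "indicator {0..} r * emeasure M {x\<in>space M. ennreal r < ennreal (\<phi> x) * indicator E x}
        \<le> indicator {0..} r * emeasure lborel {t\<in>space lborel. ennreal r < ennreal (g t) * indicator {0<..s} t}"
    proof (cases "0 \<le> r")
      case False then show ?thesis by simp
    next
      case r: True
      define m where "m = measure M {x\<in>space M. r < \<phi> x}"
      define c where "c = min s m"
      have c0: "0 \<le> c" using s by (simp add: c_def m_def)
      have set1: "{x\<in>space M. ennreal r < ennreal (\<phi> x) * indicator E x} = {x\<in>space M. r < \<phi> x} \<inter> E"
        using r by (auto simp: indicator_def ennreal_less_iff)
      have "measure M ({x\<in>space M. r < \<phi> x} \<inter> E) \<le> c"
        unfolding c_def m_def s_def using E
        by (auto intro!: finite_measure_mono)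
      then have L: "emeasure M {x\<in>space M. ennreal r < ennreal (\<phi> x) * indicator E x} \<le> ennreal c"
        unfolding set1 emeasure_eq_measure by (rule ennreal_leI)
      have sub: "{0<..<c} \<subseteq> {t\<in>space lborel. ennreal r < ennreal (g t) * indicator {0<..s} t}"
      proof
        fix t assume t: "t \<in> {0<..<c}"
        then have "r < g t" using s by (intro rearr_gt r) (auto simp: c_def m_def)
        then show "t \<in> {t\<in>space lborel. ennreal r < ennreal (g t) * indicator {0<..s} t}"
          using t r by (auto simp: c_def indicator_def ennreal_less_iff)
      qed
      have "ennreal c = emeasure lborel {0<..<c}" using c0 by simp
      also have "\<dots> \<le> emeasure lborel {t\<in>space lborel. ennreal r < ennreal (g t) * indicator {0<..s} t}"
      proof (rule emeasure_mono[OF sub])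
        have "(\<lambda>t. ennreal (indicator {0<..s} t * g t)) \<in> borel_measurable lborel"
          using g_meas[OF s(2)] by measurable
        then have "(\<lambda>t. ennreal (g t) * indicator {0<..s} t) \<in> borel_measurable lborel"
          by (rule measurable_cong[THEN iffD1, rotated]) (auto simp: indicator_def)
        then show "{t\<in>space lborel. ennreal r < ennreal (g t) * indicator {0<..s} t} \<in> sets lborel"
          by measurable
      qed
      finally show ?thesis using L r by (auto intro: mult_left_mono)
    qed
  qed
  also have "\<dots> = (\<integral>\<^sup>+t. ennreal (g t) * indicator {0<..s} t \<partial>lborel)"
  proof (rule layer_cake[symmetric])
    show "sigma_finite_measure lborel" by (rule lborel.sigma_finite_measure_axioms)
    have "(\<lambda>t. ennreal (indicator {0<..s} t * g t)) \<in> borel_measurable lborel"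
      using g_meas[OF s(2)] by measurable
    then show "(\<lambda>t. ennreal (g t) * indicator {0<..s} t) \<in> borel_measurable lborel"
      by (rule measurable_cong[THEN iffD1, rotated]) (auto simp: indicator_def)
  qed
  finally show ?thesis by (simp add: s_def)
qed

end


lemma powr_inv_iff:
  fixes r d q :: real assumes "0 \<le> r" "0 \<le> d" "0 < q"
  shows "r < d powr q \<longleftrightarrow> r powr (1/q) < d"
proof
  assume h: "r < d powr q"
  then have "r powr (1/q) < (d powr q) powr (1/q)"
    using assms by (intro powr_less_mono2) auto
  also have "\<dots> = d" using assms by (simp add: powr_powr powr_one)
  finally show "r powr (1/q) < d" .
next
  assume h: "r powr (1/q) < d"
  then have "(r powr (1/q)) powr q < d powr q"
    using assms by (intro powr_less_mono2) auto
  also have "(r powr (1/q)) powr q = r" using assms by (simp add: powr_powr powr_one)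
  finally show "r < d powr q" .
qed

theorem lemma6p1:
  fixes M :: "'a measure" and T :: "'a set set" and q :: real
    and g :: "real \<Rightarrow> real" and \<phi> :: "'a \<Rightarrow> real"
  assumes "prob_space M" and "non_atomic M" and "is_tree M T"
    and "0 < q" and "q < 1"
    and "\<And>t. t \<in> {0<..1} \<Longrightarrow> g t \<ge> 0"
    and "set_integrable lborel {0<..1} g"
    and "\<And>s t. 0 < s \<Longrightarrow> s \<le> t \<Longrightarrow> t \<le> 1 \<Longrightarrow> g t \<le> g s"
    and "(\<integral>\<^sup>+ t\<in>{0<..1}. ennreal (((1 / t) * (\<integral>u\<in>{0<..t}. g u \<partial>lborel)) powr q) \<partial>lborel) < \<infinity>"
    and "\<phi> \<in> borel_measurable M" and "\<And>x. x \<in> space M \<Longrightarrow> \<phi> x \<ge> 0"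
    and "\<And>t. t \<in> {0<..1} \<Longrightarrow> decr_rearr M \<phi> t = g t"
  shows "(\<integral>\<^sup>+ x. ennreal_powr (dyadic_max M T \<phi> x) q \<partial>M)
           \<le> (\<integral>\<^sup>+ t\<in>{0<..1}. ennreal (((1 / t) * (\<integral>u\<in>{0<..t}. g u \<partial>lborel)) powr q) \<partial>lborel)"
proof -
  note P = assms(1) and na = assms(2) and q = assms(4) and g0 = assms(6) and gi = assms(7)
    and gm = assms(8) and phim[measurable] = assms(10) and phi0 = assms(11) and rearr = assms(12)
  interpret prob_space M by (rule P)
  obtain C where tw: "tree_with_children M T C" using assms(3) unfolding is_tree_def by blast
  have Tsets: "T \<subseteq> sets M" using tw_sets[OF tw] .
  have Tcount: "countable T" using tw_countable[OF tw] .
  define Gr where "Gr t = (\<integral>u\<in>{0<..t}. g u \<partial>lborel)" for t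
  define A where "A t = (1 / t) * Gr t" for t
  define avg where "avg I = (\<integral>\<^sup>+ y\<in>I. ennreal \<bar>\<phi> y\<bar> \<partial>M) / emeasure M I" for I
  define D where "D = dyadic_max M T \<phi>"
  have D': "D x = (SUP I\<in>{I\<in>T. x\<in>I}. avg I)" for x by (simp add: D_def dyadic_max_def avg_def)
  define E where "E l = \<Union>{I\<in>T. ennreal l < avg I}" for l
  have Esets: "E l \<in> sets M" for l
    unfolding E_def using Tsets by (intro sets.countable_Union countable_subset[OF _ Tcount]) auto
  have Eeq: "{x\<in>space M. ennreal l < D x} = E l" for l
  proof (intro set_eqI iffI)
    fix x assume "x \<in> {x\<in>space M. ennreal l < D x}"
    then show "x \<in> E l" by (auto simp: D' less_SUP_iff E_def)
  next
    fix x assume "x \<in> E l"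
    then obtain I where I: "I \<in> T" "x \<in> I" "ennreal l < avg I" by (auto simp: E_def)
    then have "x \<in> space M" using Tsets sets.sets_into_space by blast
    then show "x \<in> {x\<in>space M. ennreal l < D x}" using I by (auto simp: D' less_SUP_iff)
  qed
  have Dmeas[measurable]: "D \<in> borel_measurable M"
  proof (rule borel_measurableI_greater)
    fix y :: ennreal
    show "{x\<in>space M. y < D x} \<in> sets M"
    proof (cases y)
      case (real r) then show ?thesis using Eeq[of r] Esets[of r] by simp
    next
      case top then show ?thesis by simp
    qed
  qed
  define Gm where "Gm t = (\<integral>u\<in>{0<..t}. (indicator {0<..1} u * g u) \<partial>lborel)" for t
  have gi': "integrable lborel (\<lambda>u. indicator {0<..1} u * g u)"
    using gi unfolding set_integrable_def by simp
  have Gm_mono: "mono Gm"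
  proof (rule monoI)
    fix a b :: real assume ab: "a \<le> b"
    show "Gm a \<le> Gm b"
      unfolding Gm_def set_lebesgue_integral_def
      using ab by (intro integral_mono integrable_mult_indicator gi')
        (auto simp: indicator_def intro!: g0)
  qed
  have GmGr: "Gm t = Gr t" if "t \<le> 1" for t
    unfolding Gm_def Gr_def using that
    by (intro set_lebesgue_integral_cong) (auto simp: indicator_def)
  have Am_meas: "(\<lambda>t. (1 / t) * Gm t) \<in> borel_measurable lborel"
    using borel_measurable_mono[OF Gm_mono] by measurable
  have Aeq: "A t = (1 / t) * Gm t" if "t \<le> 1" for t using GmGr[OF that] by (simp add: A_def)
  have A0: "0 \<le> A t" if "t \<in> {0<..1}" for t
    using that g_Gnonneg[OF g0 gi gm, of t] by (auto simp: A_def Gr_def)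
  have Aset: "{t\<in>{0<..1}. l < A t} \<in> sets lborel" for l
  proof -
    have "{t\<in>{0<..1}. l < A t} = {t\<in>space lborel. l < (1 / t) * Gm t} \<inter> {0<..1}"
      using Aeq by auto
    also have "\<dots> \<in> sets lborel" using Am_meas by measurable
    finally show ?thesis .
  qed
  have key: "emeasure M (E l) \<le> emeasure lborel {t\<in>{0<..1}. l < A t}" if l: "0 \<le> l" for l
  proof -
    let ?F = "{I\<in>T. ennreal l < avg I}"
    define F' where "F' = {I\<in>?F. \<forall>J\<in>?F. I \<subseteq> J \<longrightarrow> J = I}"
    have F'F: "F' \<subseteq> ?F" and UF': "\<Union>F' = E l" and dF': "disjoint F'"
      using tw_maximal[OF tw, of ?F] unfolding F'_def E_def by auto
    show ?thesis
    proof (cases "measure M (E l) = 0")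
      case True then show ?thesis by (simp add: emeasure_eq_measure)
    next
      case False
      define s where "s = measure M (E l)"
      have s: "0 < s" "s \<le> 1" using False by (auto simp: s_def zero_less_measure_iff)
      have Ipos: "ennreal l * emeasure M I < (\<integral>\<^sup>+y\<in>I. ennreal (\<phi> y) \<partial>M)" if I: "I \<in> ?F" for I
      proof -
        have IM: "I \<in> sets M" using I Tsets by auto
        have mp: "0 < measure M I" using tw_pos[OF tw] I by auto
        have a: "(\<integral>\<^sup>+y\<in>I. ennreal \<bar>\<phi> y\<bar> \<partial>M) = (\<integral>\<^sup>+y\<in>I. ennreal (\<phi> y) \<partial>M)"
          by (intro nn_integral_cong) (simp add: phi0)
        show ?thesis
        proof (rule ccontr)
          assume "\<not> ?thesis"
          then have le: "(\<integral>\<^sup>+y\<in>I. ennreal \<bar>\<phi> y\<bar> \<partial>M) \<le> ennreal l * emeasure M I"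
            using a by simp
          have "avg I \<le> ennreal l * emeasure M I / emeasure M I"
            unfolding avg_def by (rule divide_right_mono_ennreal[OF le])
          also have "\<dots> = ennreal l"
            using mp by (intro ennreal_mult_divide_eq) (auto simp: emeasure_eq_measure)
          finally have "avg I \<le> ennreal l" .
          then show False using I leD by blast
        qed
      qed
      define N where "N = density M (\<lambda>x. ennreal (\<phi> x))"
      have Nem: "emeasure N X = (\<integral>\<^sup>+x\<in>X. ennreal (\<phi> x) \<partial>M)" if "X \<in> sets M" for X
        unfolding N_def using that by (intro emeasure_density) auto
      have Nsets: "sets N = sets M" unfolding N_def by simp
      have "F' \<noteq> {}"
      proof
        assume "F' = {}"
        then have "E l = {}" using UF' by auto
        then show False using False by simp
      qed
      then obtain I0 where I0: "I0 \<in> F'" by blast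
      define G where "G = F' - {I0}"
      have GT: "G \<subseteq> T" using F'F by (auto simp: G_def)
      have Gc: "countable G" using countable_subset[OF GT Tcount] .
      have Gsets: "\<And>I. I \<in> G \<Longrightarrow> I \<in> sets M" using GT Tsets by auto
      have UGs: "\<Union>G \<in> sets M" using Gc Gsets by (intro sets.countable_Union) auto
      have I0s: "I0 \<in> sets M" using I0 F'F Tsets by auto
      have dG: "disjoint_family_on (\<lambda>I. I) G"
        unfolding disjoint_family_on_def using dF' unfolding G_def by (auto dest: disjointD)
      have disj0: "I0 \<inter> \<Union>G = {}" using dF' I0 unfolding G_def by (auto dest: disjointD)
      have EU: "E l = I0 \<union> \<Union>G" using UF' I0 by (auto simp: G_def)
      have eMG: "emeasure M (\<Union>G) = (\<integral>\<^sup>+I. emeasure M I \<partial>count_space G)"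
        using emeasure_UN_countable[of G "\<lambda>I. I" M, OF Gsets Gc dG] by simp
      have eNG: "emeasure N (\<Union>G) = (\<integral>\<^sup>+I. emeasure N I \<partial>count_space G)"
        using emeasure_UN_countable[of G "\<lambda>I. I" N] Gsets Gc dG by (simp add: Nsets)
      have geq: "ennreal l * emeasure M (\<Union>G) \<le> emeasure N (\<Union>G)"
      proof -
        have "ennreal l * emeasure M (\<Union>G) = (\<integral>\<^sup>+I. ennreal l * emeasure M I \<partial>count_space G)"
          unfolding eMG by (rule nn_integral_cmult[symmetric]) simp
        also have "\<dots> \<le> (\<integral>\<^sup>+I. emeasure N I \<partial>count_space G)"
        proof (rule nn_integral_mono)
          fix I assume "I \<in> space (count_space G)"
          then have "I \<in> ?F" "I \<in> sets M" using F'F Gsets by (auto simp: G_def)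
          then show "ennreal l * emeasure M I \<le> emeasure N I"
            using Ipos[of I] Nem[of I] by simp
        qed
        finally show ?thesis using eNG by simp
      qed
      have NE: "emeasure N (E l) = emeasure N I0 + emeasure N (\<Union>G)"
        unfolding EU using I0s UGs disj0 by (intro plus_emeasure[symmetric]) (auto simp: Nsets)
      have ME: "emeasure M (E l) = emeasure M I0 + emeasure M (\<Union>G)"
        unfolding EU using I0s UGs disj0 by (intro plus_emeasure[symmetric]) auto
      have lt: "ennreal (l * s) < emeasure N (E l)"
      proof (cases "emeasure N (\<Union>G) = \<infinity>")
        case True then show ?thesis using NE by simp
      next
        case fin: False
        have "ennreal (l * s) = ennreal l * emeasure M (E l)"
          using l by (simp add: emeasure_eq_measure s_def ennreal_mult)
        also have "\<dots> = ennreal l * emeasure M I0 + ennreal l * emeasure M (\<Union>G)"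
          unfolding ME by (rule distrib_left)
        also have "\<dots> \<le> ennreal l * emeasure M I0 + emeasure N (\<Union>G)"
          using geq by (rule add_left_mono)
        also have "\<dots> < emeasure N I0 + emeasure N (\<Union>G)"
          using Ipos[of I0] I0 F'F Nem[OF I0s] fin
          by (subst (1 2) add.commute) (auto simp: ennreal_add_left_cancel_less)
        finally show ?thesis using NE by simp
      qed
      have "emeasure N (E l) \<le> (\<integral>\<^sup>+t\<in>{0<..s}. ennreal (g t) \<partial>lborel)"
        using HL[OF P na g0 gi gm phim phi0 rearr Esets[of l]] Nem[OF Esets[of l]] by (simp add: s_def)
      also have "\<dots> = ennreal (Gr s)"
        using g_nn[OF g0 gi gm, of s] s by (simp add: Gr_def)
      finally have "ennreal (l * s) < ennreal (Gr s)" using lt by simp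
      moreover have "0 \<le> l * s" using l s by simp
      ultimately have lsG: "l * s < Gr s" using ennreal_less_iff by blast
      have sub: "{0<..s} \<subseteq> {t\<in>{0<..1}. l < A t}"
      proof
        fix t assume t: "t \<in> {0<..s}"
        then have t0: "0 < t" "t \<le> s" by auto
        have "t * Gr s \<le> s * Gr t"
          using g_avg_mono[OF g0 gi gm t0(1) t0(2) s(2)] by (simp add: Gr_def)
        moreover have "t * (l * s) < t * Gr s" using lsG t0 by simp
        ultimately have "s * (l * t) < s * Gr t" by (simp add: algebra_simps)
        then have "l * t < Gr t" using s by simp
        then have "l < A t" using t0 by (simp add: A_def field_simps)
        then show "t \<in> {t\<in>{0<..1}. l < A t}" using t s by auto
      qed
      have "emeasure M (E l) = emeasure lborel {0<..s}" using s by (simp add: emeasure_eq_measure s_def)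
      also have "\<dots> \<le> emeasure lborel {t\<in>{0<..1}. l < A t}"
        by (rule emeasure_mono[OF sub Aset])
      finally show ?thesis .
    qed
  qed
  define H where "H t = ennreal (A t powr q) * indicator {0<..1} t" for t
  have Hm: "H \<in> borel_measurable lborel"
  proof -
    have "(\<lambda>t. ennreal (((1 / t) * Gm t) powr q) * indicator {0<..1} t) \<in> borel_measurable lborel"
      using Am_meas by measurable
    also have "(\<lambda>t. ennreal (((1 / t) * Gm t) powr q) * indicator {0<..1} t) = H"
      using Aeq by (auto simp: H_def fun_eq_iff indicator_def)
    finally show ?thesis .
  qed
  have Pm: "(\<lambda>x. ennreal_powr (D x) q) \<in> borel_measurable M"
    unfolding ennreal_powr_def by measurable
  have "(\<integral>\<^sup>+ x. ennreal_powr (D x) q \<partial>M)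
      = (\<integral>\<^sup>+r. indicator {0..} r * emeasure M {x\<in>space M. ennreal r < ennreal_powr (D x) q} \<partial>lborel)"
    using Pm by (intro layer_cake) (auto intro: prob_space_imp_sigma_finite[OF P])
  also have "\<dots> \<le> (\<integral>\<^sup>+r. indicator {0..} r * emeasure lborel {t\<in>space lborel. ennreal r < H t} \<partial>lborel)"
  proof (intro nn_integral_mono)
    fix r :: real
    show "indicator {0..} r * emeasure M {x\<in>space M. ennreal r < ennreal_powr (D x) q}
        \<le> indicator {0..} r * emeasure lborel {t\<in>space lborel. ennreal r < H t}"
    proof (cases "0 \<le> r")
      case False then show ?thesis by simp
    next
      case r: True
      have r1: "0 \<le> r powr (1/q)" by simp
      have s1: "{x\<in>space M. ennreal r < ennreal_powr (D x) q} = {x\<in>space M. ennreal (r powr (1/q)) < D x}"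
      proof (intro Collect_cong conj_cong refl)
        fix x
        show "ennreal r < ennreal_powr (D x) q \<longleftrightarrow> ennreal (r powr (1/q)) < D x"
        proof (cases "D x")
          case (real d)
          then show ?thesis using r q powr_inv_iff[of r d q]
            by (simp add: ennreal_powr_def ennreal_less_iff)
        next
          case top then show ?thesis by (simp add: ennreal_powr_def)
        qed
      qed
      have s2: "{t\<in>space lborel. ennreal r < H t} = {t\<in>{0<..1}. r powr (1/q) < A t}"
      proof (intro set_eqI)
        fix t
        show "t \<in> {t\<in>space lborel. ennreal r < H t} \<longleftrightarrow> t \<in> {t\<in>{0<..1}. r powr (1/q) < A t}"
        proof (cases "t \<in> {0<..1}")
          case True
          then show ?thesis using r q A0[OF True] powr_inv_iff[of r "A t" q]
            by (simp add: H_def ennreal_less_iff)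
        next
          case False then show ?thesis by (auto simp: H_def)
        qed
      qed
      have "emeasure M {x\<in>space M. ennreal r < ennreal_powr (D x) q} \<le> emeasure lborel {t\<in>space lborel. ennreal r < H t}"
        unfolding s1 s2 Eeq using key[OF r1] .
      then show ?thesis by (intro mult_left_mono) auto
    qed
  qed
  also have "\<dots> = (\<integral>\<^sup>+t. H t \<partial>lborel)"
    by (rule layer_cake[symmetric, OF lborel.sigma_finite_measure_axioms Hm])
  finally show ?thesis by (simp add: H_def A_def Gr_def D_def)
qed

end
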